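(* Let $O$ be Haar distributed on $\mathbb O(n)$ and $T_{p,q}=\sum_{i\le p,\,j\le q}O_{ij}^2$. There is a constant $C$ such that for all $n\ge2$ and all $1\le p,q\le n$, $$|\kappa_4(T_{p,q})|\le C\,\frac{p^2q^2}{n^4},$$ where $\kappa_4$ denotes the fourth classical cumulant. *)

theory Defs
  imports "HOL-Probability.Probability"
begin

text \<open>n x n real matrices are represented as functions nat => nat => real,
  only the entries with indices < n being relevant (0-based indexing).\<close>

definition orthogonal_mat :: "nat \<Rightarrow> (nat \<Rightarrow> nat \<Rightarrow> real) \<Rightarrow> bool" where
  "orthogonal_mat n U \<longleftrightarrow>
     (\<forall>i<n. \<forall>j<n. (\<Sum>k<n. U k i * U k j) = (if i = j then 1 else 0))"

definition mat_mult :: "nat \<Rightarrow> (nat \<Rightarrow> nat \<Rightarrow> real) \<Rightarrow> (nat \<Rightarrow> nat \<Rightarrow> real) \<Rightarrow> (nat \<Rightarrow> nat \<Rightarrow> real)" where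
  "mat_mult n A B = (\<lambda>i j. \<Sum>k<n. A i k * B k j)"

definition mat_entries :: "nat \<Rightarrow> (nat \<Rightarrow> nat \<Rightarrow> real) \<Rightarrow> (nat \<times> nat \<Rightarrow> real)" where
  "mat_entries n A = (\<lambda>ij\<in>{..<n} \<times> {..<n}. A (fst ij) (snd ij))"

definition mat_space :: "nat \<Rightarrow> (nat \<times> nat \<Rightarrow> real) measure" where
  "mat_space n = PiM ({..<n} \<times> {..<n}) (\<lambda>_. borel)"

definition haar_orthogonal :: "nat \<Rightarrow> (nat \<Rightarrow> nat \<Rightarrow> real) measure \<Rightarrow> bool" where
  "haar_orthogonal n \<mu> \<longleftrightarrow>
     prob_space \<mu> \<and>
     (\<forall>i j. (\<lambda>A. A i j) \<in> borel_measurable \<mu>) \<and>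
     (AE A in \<mu>. orthogonal_mat n A) \<and>
     (\<forall>U. orthogonal_mat n U \<longrightarrow>
        distr \<mu> (mat_space n) (\<lambda>A. mat_entries n (mat_mult n U A))
          = distr \<mu> (mat_space n) (\<lambda>A. mat_entries n A))"

definition raw_moment :: "'a measure \<Rightarrow> ('a \<Rightarrow> real) \<Rightarrow> nat \<Rightarrow> real" where
  "raw_moment M X k = (\<integral>\<omega>. X \<omega> ^ k \<partial>M)"

definition cumulant4 :: "'a measure \<Rightarrow> ('a \<Rightarrow> real) \<Rightarrow> real" where
  "cumulant4 M X =
     raw_moment M X 4 - 4 * raw_moment M X 3 * raw_moment M X 1
     - 3 * (raw_moment M X 2)^2 + 12 * raw_moment M X 2 * (raw_moment M X 1)^2
     - 6 * (raw_moment M X 1)^4"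

end

theory Submission
  imports Defs "Jordan_Normal_Form.Determinant"
begin

lemma orth_trans:
  assumes "Defs.orthogonal_mat n A"
  shows "Defs.orthogonal_mat n (\<lambda>i j. A j i)"
proof -
  define M :: "real mat" where "M = mat n n (\<lambda>(i,j). A i j)"
  have M: "M \<in> carrier_mat n n" unfolding M_def by auto
  have MT: "transpose_mat M \<in> carrier_mat n n" using M by auto
  have "transpose_mat M * M = 1\<^sub>m n"
  proof (rule eq_matI)
    fix i j assume ij: "i < dim_row (1\<^sub>m n)" "j < dim_col (1\<^sub>m n)"
    then have "(transpose_mat M * M) $$ (i,j) = (\<Sum>k<n. A k i * A k j)"
      unfolding M_def by (auto simp: scalar_prod_def atLeast0LessThan intro!: sum.cong)
    also have "\<dots> = 1\<^sub>m n $$ (i,j)" using assms ij unfolding Defs.orthogonal_mat_def by auto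
    finally show "(transpose_mat M * M) $$ (i,j) = 1\<^sub>m n $$ (i,j)" .
  qed (use M in auto)
  then have "M * transpose_mat M = 1\<^sub>m n" by (rule mat_mult_left_right_inverse[OF MT M])
  then show ?thesis unfolding Defs.orthogonal_mat_def
  proof (intro allI impI)
    fix i j assume e: "M * transpose_mat M = 1\<^sub>m n" and ij: "i < n" "j < n"
    have "(\<Sum>k<n. A i k * A j k) = (M * transpose_mat M) $$ (i,j)"
      using ij unfolding M_def by (auto simp: scalar_prod_def atLeast0LessThan intro!: sum.cong)
    also have "\<dots> = (if i = j then 1 else 0)" using ij e by auto
    finally show "(\<Sum>k<n. A i k * A j k) = (if i = j then 1 else 0)" .
  qed
qed

definition unent :: "(nat \<times> nat \<Rightarrow> real) \<Rightarrow> nat \<Rightarrow> nat \<Rightarrow> real" where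
  "unent x = (\<lambda>i j. x (i,j))"

definition loc :: "nat \<Rightarrow> ((nat \<Rightarrow> nat \<Rightarrow> real) \<Rightarrow> 'b) \<Rightarrow> bool" where
  "loc n F \<longleftrightarrow> (\<forall>A B. (\<forall>i<n. \<forall>j<n. A i j = B i j) \<longrightarrow> F A = F B)"

lemma loc_unent: "loc n F \<Longrightarrow> F (unent (mat_entries n A)) = F A"
  unfolding loc_def by (drule spec[of _ "unent (mat_entries n A)"], drule spec[of _ A])
    (auto simp: unent_def mat_entries_def)

lemma loc_app: "loc n F \<Longrightarrow> (\<And>i j. i < n \<Longrightarrow> j < n \<Longrightarrow> A i j = B i j) \<Longrightarrow> F A = F B"
  unfolding loc_def by blast

lemma ent_meas:
  assumes "\<And>i j. i < n \<Longrightarrow> j < n \<Longrightarrow> (\<lambda>A. f A i j) \<in> borel_measurable N"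
  shows "(\<lambda>A. mat_entries n (f A)) \<in> N \<rightarrow>\<^sub>M mat_space n"
  unfolding mat_entries_def mat_space_def
  by (rule measurable_restrict) (use assms in auto)

lemma comp_meas: "i < n \<Longrightarrow> j < n \<Longrightarrow> (\<lambda>x. x (i,j)) \<in> borel_measurable (mat_space n)"
  unfolding mat_space_def by (rule measurable_component_singleton) auto

locale haarL =
  fixes n :: nat and \<mu> :: "(nat \<Rightarrow> nat \<Rightarrow> real) measure"
  assumes haar: "haar_orthogonal n \<mu>"
begin

lemma prob: "prob_space \<mu>" using haar unfolding haar_orthogonal_def by auto

lemma emeas[measurable]: "(\<lambda>A. A i j) \<in> borel_measurable \<mu>" using haar unfolding haar_orthogonal_def by auto

lemma AE_orth: "AE A in \<mu>. Defs.orthogonal_mat n A" using haar unfolding haar_orthogonal_def by auto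

lemma LI:
  fixes F :: "(nat \<Rightarrow> nat \<Rightarrow> real) \<Rightarrow> real"
  assumes U: "Defs.orthogonal_mat n U" and L: "loc n F"
    and M: "(\<lambda>x. F (unent x)) \<in> borel_measurable (mat_space n)"
  shows "(\<integral>A. F (Defs.mat_mult n U A) \<partial>\<mu>) = (\<integral>A. F A \<partial>\<mu>)"
proof -
  let ?h = "\<lambda>x. F (unent x)"
  have m1: "(\<lambda>A. mat_entries n (Defs.mat_mult n U A)) \<in> \<mu> \<rightarrow>\<^sub>M mat_space n"
    by (rule ent_meas) (auto simp: Defs.mat_mult_def)
  have m2: "(\<lambda>A. mat_entries n A) \<in> \<mu> \<rightarrow>\<^sub>M mat_space n"
    by (rule ent_meas) auto
  have d: "distr \<mu> (mat_space n) (\<lambda>A. mat_entries n (Defs.mat_mult n U A))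
          = distr \<mu> (mat_space n) (\<lambda>A. mat_entries n A)"
    using haar U unfolding haar_orthogonal_def by blast
  have "(\<integral>A. F (Defs.mat_mult n U A) \<partial>\<mu>) = (\<integral>A. ?h (mat_entries n (Defs.mat_mult n U A)) \<partial>\<mu>)"
    using loc_unent[OF L] by simp
  also have "\<dots> = integral\<^sup>L (distr \<mu> (mat_space n) (\<lambda>A. mat_entries n (Defs.mat_mult n U A))) ?h"
    by (rule integral_distr[symmetric, OF m1 M])
  also have "\<dots> = integral\<^sup>L (distr \<mu> (mat_space n) (\<lambda>A. mat_entries n A)) ?h" by (simp add: d)
  also have "\<dots> = (\<integral>A. ?h (mat_entries n A) \<partial>\<mu>)" by (rule integral_distr[OF m2 M])
  also have "\<dots> = (\<integral>A. F A \<partial>\<mu>)" using loc_unent[OF L] by simp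
  finally show ?thesis .
qed


lemma pairmeas: "(\<lambda>p. Defs.mat_mult n (\<lambda>i j. snd p j i) (fst p) i j) \<in> borel_measurable (\<mu> \<Otimes>\<^sub>M \<mu>)"
  unfolding Defs.mat_mult_def by measurable

lemma TR:
  fixes F :: "(nat \<Rightarrow> nat \<Rightarrow> real) \<Rightarrow> real"
  assumes L: "loc n F"
    and M: "(\<lambda>x. F (unent x)) \<in> borel_measurable (mat_space n)"
    and B: "\<And>X. \<bar>F X\<bar> \<le> K"
  shows "(\<integral>A. F A \<partial>\<mu>) = (\<integral>A. F (\<lambda>i j. A j i) \<partial>\<mu>)"
proof -
  interpret P: prob_space \<mu> by (rule prob)
  interpret PP: pair_prob_space \<mu> \<mu> by unfold_locales
  define f where "f A B = F (Defs.mat_mult n (\<lambda>i j. B j i) A)" for A B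
  have mf: "(\<lambda>(x,y). f x y) \<in> borel_measurable (\<mu> \<Otimes>\<^sub>M \<mu>)"
  proof -
    have e: "(\<lambda>(x,y). f x y) = (\<lambda>p. F (unent (mat_entries n (Defs.mat_mult n (\<lambda>i j. snd p j i) (fst p)))))"
      using loc_unent[OF L] by (auto simp: f_def fun_eq_iff)
    have "(\<lambda>p. mat_entries n (Defs.mat_mult n (\<lambda>i j. snd p j i) (fst p))) \<in> (\<mu> \<Otimes>\<^sub>M \<mu>) \<rightarrow>\<^sub>M mat_space n"
      by (rule ent_meas) (rule pairmeas)
    then show ?thesis unfolding e using M by (rule measurable_compose)
  qed
  have int: "integrable (\<mu> \<Otimes>\<^sub>M \<mu>) (\<lambda>(x,y). f x y)"
    by (rule PP.P.integrable_const_bound[where B=K]) (use mf B in \<open>auto simp: f_def split: prod.split\<close>)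
  have fub: "(\<integral>y. (\<integral>x. f x y \<partial>\<mu>) \<partial>\<mu>) = (\<integral>x. (\<integral>y. f x y \<partial>\<mu>) \<partial>\<mu>)"
    by (rule PP.Fubini_integral[OF int])
  have mfy: "(\<lambda>y. \<integral>x. f x y \<partial>\<mu>) \<in> borel_measurable \<mu>"
  proof -
    have "(\<lambda>(y,x). f x y) \<in> borel_measurable (\<mu> \<Otimes>\<^sub>M \<mu>)"
      using measurable_compose[OF measurable_pair_swap' mf] by (simp add: case_prod_beta)
    then show ?thesis by (rule P.borel_measurable_lebesgue_integral)
  qed
  have mfx: "(\<lambda>x. \<integral>y. f x y \<partial>\<mu>) \<in> borel_measurable \<mu>"
    using mf by (rule P.borel_measurable_lebesgue_integral)
  have "(\<integral>y. (\<integral>x. f x y \<partial>\<mu>) \<partial>\<mu>) = (\<integral>y. (\<integral>A. F A \<partial>\<mu>) \<partial>\<mu>)"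
  proof (rule integral_cong_AE[OF mfy])
    show "AE y in \<mu>. (\<integral>x. f x y \<partial>\<mu>) = (\<integral>A. F A \<partial>\<mu>)"
      using AE_orth
    proof eventually_elim
      case (elim y)
      show ?case unfolding f_def by (rule LI[OF orth_trans[OF elim] L M])
    qed
  qed simp
  also have "\<dots> = (\<integral>A. F A \<partial>\<mu>)" by (simp add: P.prob_space)
  finally have 1: "(\<integral>y. (\<integral>x. f x y \<partial>\<mu>) \<partial>\<mu>) = (\<integral>A. F A \<partial>\<mu>)" .
  define G where "G X = F (\<lambda>i j. X j i)" for X
  have LG: "loc n G" using L unfolding loc_def G_def by auto
  have MG: "(\<lambda>x. G (unent x)) \<in> borel_measurable (mat_space n)"
  proof -
    have e: "(\<lambda>x. G (unent x)) = (\<lambda>x. F (unent (mat_entries n (\<lambda>i j. x (j,i)))))"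
      using loc_unent[OF L] by (auto simp: G_def unent_def fun_eq_iff)
    have "(\<lambda>x. mat_entries n (\<lambda>i j. x (j,i))) \<in> mat_space n \<rightarrow>\<^sub>M mat_space n"
      by (rule ent_meas) (rule comp_meas, auto)
    then show ?thesis unfolding e using M by (rule measurable_compose)
  qed
  have "(\<integral>x. (\<integral>y. f x y \<partial>\<mu>) \<partial>\<mu>) = (\<integral>x. (\<integral>A. G A \<partial>\<mu>) \<partial>\<mu>)"
  proof (rule integral_cong_AE[OF mfx])
    show "AE x in \<mu>. (\<integral>y. f x y \<partial>\<mu>) = (\<integral>A. G A \<partial>\<mu>)"
      using AE_orth
    proof eventually_elim
      case (elim x)
      have "\<And>y. f x y = G (Defs.mat_mult n (\<lambda>i j. x j i) y)"
        unfolding f_def G_def Defs.mat_mult_def by (simp add: mult.commute)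
      then show ?case using LI[OF orth_trans[OF elim] LG MG] by simp
    qed
  qed simp
  also have "\<dots> = (\<integral>A. F (\<lambda>i j. A j i) \<partial>\<mu>)" by (simp add: G_def P.prob_space)
  finally show ?thesis using 1 fub by simp
qed


lemma delta_mult: "(if P then 1 else 0) * (x::real) = (if P then x else 0)" by simp

definition PB :: "((nat \<Rightarrow> nat \<Rightarrow> real) \<Rightarrow> real) \<Rightarrow> bool" where
  "PB F \<longleftrightarrow> loc n F \<and> (\<lambda>x. F (unent x)) \<in> borel_measurable (mat_space n) \<and>
     (\<exists>K. \<forall>X. (\<forall>i<n. \<forall>j<n. \<bar>X i j\<bar> \<le> 1) \<longrightarrow> \<bar>F X\<bar> \<le> K)"

lemma PB_const[simp, intro!]: "PB (\<lambda>A. c)"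
  unfolding PB_def loc_def by auto

lemma PB_ent[intro!]: "i < n \<Longrightarrow> j < n \<Longrightarrow> PB (\<lambda>A. A i j)"
  unfolding PB_def loc_def unent_def by (auto intro!: comp_meas)

lemma loc2: "loc n F \<Longrightarrow> loc n G \<Longrightarrow> loc n (\<lambda>A. H (F A) (G A))"
  unfolding loc_def by metis

lemma PB_add[intro!]: "PB F \<Longrightarrow> PB G \<Longrightarrow> PB (\<lambda>A. F A + G A)"
  unfolding PB_def
  apply (auto intro: loc2[where H="(+)"])
  subgoal for K1 K2 by (rule exI[of _ "K1 + K2"]) (auto intro: order.trans[OF abs_triangle_ineq] add_mono)
  done

lemma PB_uminus[intro!]: "PB F \<Longrightarrow> PB (\<lambda>A. - F A)"
  unfolding PB_def loc_def by auto

lemma PB_diff[intro!]: "PB F \<Longrightarrow> PB G \<Longrightarrow> PB (\<lambda>A. F A - G A)"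
  using PB_add[of F "\<lambda>A. - G A"] PB_uminus[of G] by simp

lemma PB_mult[intro!]: "PB F \<Longrightarrow> PB G \<Longrightarrow> PB (\<lambda>A. F A * G A)"
  unfolding PB_def
  apply (auto intro: loc2[where H="(*)"])
  subgoal for K1 K2 
    apply (rule exI[of _ "\<bar>K1\<bar> * \<bar>K2\<bar>"]) 
    apply (auto simp: abs_mult intro!: mult_mono')
     apply (meson abs_ge_self order.trans)+
    done
  done

lemma PB_power[intro!]: "PB F \<Longrightarrow> PB (\<lambda>A. F A ^ k)"
  by (induction k) auto

lemma PB_sum_gen: "finite S \<Longrightarrow> (\<And>i. i \<in> S \<Longrightarrow> PB (F i)) \<Longrightarrow> PB (\<lambda>A. \<Sum>i\<in>S. F i A)"
  by (induction S rule: finite_induct) auto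

lemma PB_sum[intro!]: "(\<And>i. i \<in> S \<Longrightarrow> PB (F i)) \<Longrightarrow> finite S \<Longrightarrow> PB (\<lambda>A. \<Sum>i\<in>S. F i A)"
  using PB_sum_gen by blast

lemma orth_bound: "Defs.orthogonal_mat n A \<Longrightarrow> i < n \<Longrightarrow> j < n \<Longrightarrow> \<bar>A i j\<bar> \<le> 1"
proof -
  assume o: "Defs.orthogonal_mat n A" and ij: "i < n" "j < n"
  have "(\<Sum>k<n. A k j * A k j) = 1" using o ij unfolding Defs.orthogonal_mat_def by auto
  moreover have "A i j * A i j \<le> (\<Sum>k<n. A k j * A k j)"
    by (rule member_le_sum) (use ij in auto)
  ultimately have "A i j ^ 2 \<le> 1 ^ 2" by (simp add: power2_eq_square)
  then show ?thesis using abs_le_square_iff[of "A i j" 1] by simp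
qed

lemma PB_meas: "PB F \<Longrightarrow> F \<in> borel_measurable \<mu>"
proof -
  assume P: "PB F"
  then have L: "loc n F" and M: "(\<lambda>x. F (unent x)) \<in> borel_measurable (mat_space n)"
    unfolding PB_def by auto
  have "(\<lambda>A. mat_entries n A) \<in> \<mu> \<rightarrow>\<^sub>M mat_space n" by (rule ent_meas) auto
  from measurable_compose[OF this M] show ?thesis using loc_unent[OF L] by simp
qed

lemma PB_int[simp]: "PB F \<Longrightarrow> integrable \<mu> F"
proof -
  assume P: "PB F"
  then obtain K where K: "\<And>X. (\<forall>i<n. \<forall>j<n. \<bar>X i j\<bar> \<le> 1) \<Longrightarrow> \<bar>F X\<bar> \<le> K"
    unfolding PB_def by auto
  interpret prob_space \<mu> by (rule prob)
  show ?thesis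
  proof (rule integrable_const_bound[where B=K])
    show "AE x in \<mu>. norm (F x) \<le> K" using AE_orth by eventually_elim (auto intro!: K orth_bound)
  qed (rule PB_meas[OF P])
qed

lemma loc_meas_compose:
  assumes L: "loc n G" and M: "(\<lambda>x. G (unent x)) \<in> borel_measurable (mat_space n)"
    and P: "\<And>i j. i < n \<Longrightarrow> j < n \<Longrightarrow> (\<lambda>x. \<phi> x i j) \<in> borel_measurable N"
  shows "(\<lambda>x. G (\<phi> x)) \<in> borel_measurable N"
proof -
  have "(\<lambda>x. mat_entries n (\<phi> x)) \<in> N \<rightarrow>\<^sub>M mat_space n" by (rule ent_meas) (rule P)
  from measurable_compose[OF this M] show ?thesis using loc_unent[OF L] by simp
qed

lemma LIP:
  fixes F :: "(nat \<Rightarrow> nat \<Rightarrow> real) \<Rightarrow> real"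
  assumes s: "\<sigma> permutes {..<n}" and L: "loc n F"
    and M: "(\<lambda>x. F (unent x)) \<in> borel_measurable (mat_space n)"
  shows "(\<integral>A. F (\<lambda>i j. A (\<sigma> i) j) \<partial>\<mu>) = (\<integral>A. F A \<partial>\<mu>)"
proof -
  define U where "U i k = (if k = \<sigma> i then 1 else 0::real)" for i k
  have sl: "i < n \<Longrightarrow> \<sigma> i < n" for i using s by (meson lessThan_iff permutes_in_image)
  have U: "Defs.orthogonal_mat n U" unfolding Defs.orthogonal_mat_def
  proof (intro allI impI)
    fix i j assume ij: "i < n" "j < n"
    have "(\<Sum>k<n. U k i * U k j) = (\<Sum>k<n. (\<lambda>k. if k = i \<and> k = j then 1 else 0::real) (\<sigma> k))"
      unfolding U_def by (intro sum.cong) auto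
    also have "\<dots> = (\<Sum>k<n. (if k = i \<and> k = j then 1 else 0::real))"
      using sum.permute[OF s, of "\<lambda>k. if k = i \<and> k = j then 1 else 0::real"] by (simp add: comp_def)
    also have "\<dots> = (if i = j then 1 else 0)" using ij by (cases "i = j") (auto intro!: sum.neutral)
    finally show "(\<Sum>k<n. U k i * U k j) = (if i = j then 1 else 0)" .
  qed
  have "F (Defs.mat_mult n U A) = F (\<lambda>i j. A (\<sigma> i) j)" for A
    by (rule loc_app[OF L]) (use sl in \<open>auto simp: Defs.mat_mult_def U_def delta_mult sum.delta\<close>)
  with LI[OF U L M] show ?thesis by simp
qed


lemma LIPb: "\<sigma> permutes {..<n} \<Longrightarrow> PB F \<Longrightarrow> (\<integral>A. F (\<lambda>i j. A (\<sigma> i) j) \<partial>\<mu>) = (\<integral>A. F A \<partial>\<mu>)"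
  unfolding PB_def using LIP by blast

lemma LIS:
  assumes r: "r < n" and P: "PB F"
  shows "(\<integral>A. F (\<lambda>i j. if i = r then - A i j else A i j) \<partial>\<mu>) = (\<integral>A. F A \<partial>\<mu>)"
proof -
  have L: "loc n F" and M: "(\<lambda>x. F (unent x)) \<in> borel_measurable (mat_space n)"
    using P unfolding PB_def by auto
  define U where "U i k = (if i = k then (if i = r then -1 else 1) else 0::real)" for i k
  have U: "Defs.orthogonal_mat n U" unfolding Defs.orthogonal_mat_def
  proof (intro allI impI)
    fix i j assume ij: "i < n" "j < n"
    have "(\<Sum>k<n. U k i * U k j) = (\<Sum>k<n. (if k = i \<and> k = j then 1 else 0::real))"
      unfolding U_def by (intro sum.cong) auto
    also have "\<dots> = (if i = j then 1 else 0)" using ij by (cases "i = j") (auto intro!: sum.neutral)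
    finally show "(\<Sum>k<n. U k i * U k j) = (if i = j then 1 else 0)" .
  qed
  have "F (Defs.mat_mult n U A) = F (\<lambda>i j. if i = r then - A i j else A i j)" for A
  proof (rule loc_app[OF L])
    fix i j assume ij: "i < n" "j < n"
    have "Defs.mat_mult n U A i j = (\<Sum>k<n. if k = i then (if i = r then - A k j else A k j) else 0)"
      unfolding Defs.mat_mult_def U_def by (intro sum.cong) auto
    also have "\<dots> = (if i = r then - A i j else A i j)" using ij by (simp add: sum.delta')
    finally show "Defs.mat_mult n U A i j = (if i = r then - A i j else A i j)" .
  qed
  with LI[OF U L M] show ?thesis by simp
qed

lemma sum_split01: "2 \<le> (n::nat) \<Longrightarrow> (\<Sum>k<n. f k) = f 0 + f 1 + (\<Sum>k\<in>{2..<n}. f k)"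
proof -
  assume "2 \<le> n"
  then have "{..<n} = insert 0 (insert 1 {2..<n})" by auto
  then show ?thesis by (simp add: add.assoc)
qed

lemma LIR:
  assumes n2: "2 \<le> n" and P: "PB F"
  shows "(\<integral>A. F (\<lambda>i j. if i = 0 then (A 0 j + A 1 j) / sqrt 2
              else if i = 1 then (A 1 j - A 0 j) / sqrt 2 else A i j) \<partial>\<mu>) = (\<integral>A. F A \<partial>\<mu>)"
proof -
  have L: "loc n F" and M: "(\<lambda>x. F (unent x)) \<in> borel_measurable (mat_space n)"
    using P unfolding PB_def by auto
  define c :: real where "c = 1 / sqrt 2"
  have cc: "c * c = 1/2" unfolding c_def by (simp add: real_sqrt_mult[symmetric])
  define U :: "nat \<Rightarrow> nat \<Rightarrow> real" where "U i k = (if i = 0 then (if k = 0 \<or> k = 1 then c else 0)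
      else if i = 1 then (if k = 0 then - c else if k = 1 then c else 0)
      else if i = k then 1 else 0::real)" for i k
  have U: "Defs.orthogonal_mat n U" unfolding Defs.orthogonal_mat_def
  proof (intro allI impI)
    fix i j assume ij: "i < n" "j < n"
    have z: "(\<Sum>k\<in>{2..<n}. U k i * U k j) = (if i = j \<and> 2 \<le> i then 1 else 0)"
    proof -
      have "(\<Sum>k\<in>{2..<n}. U k i * U k j) = (\<Sum>k\<in>{2..<n}. if k = i \<and> k = j then 1 else 0)"
        unfolding U_def by (intro sum.cong) auto
      also have "\<dots> = (if i = j \<and> 2 \<le> i then 1 else 0)"
        using ij by (cases "i = j") (auto intro!: sum.neutral)
      finally show ?thesis .
    qed
    show "(\<Sum>k<n. U k i * U k j) = (if i = j then 1 else 0)"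
      unfolding sum_split01[OF n2] z using cc by (auto simp: U_def)
  qed
  have "F (Defs.mat_mult n U A) = F (\<lambda>i j. if i = 0 then (A 0 j + A 1 j) / sqrt 2
              else if i = 1 then (A 1 j - A 0 j) / sqrt 2 else A i j)" for A
  proof (rule loc_app[OF L])
    fix i j assume ij: "i < n" "j < n"
    have z: "(\<Sum>k\<in>{2..<n}. U i k * A k j) = (if 2 \<le> i then A i j else 0)"
    proof -
      have "(\<Sum>k\<in>{2..<n}. U i k * A k j) = (\<Sum>k\<in>{2..<n}. if k = i then A k j else 0)"
        unfolding U_def by (intro sum.cong) auto
      also have "\<dots> = (if 2 \<le> i then A i j else 0)" using ij by (simp add: sum.delta')
      finally show ?thesis .
    qed
    show "Defs.mat_mult n U A i j = (if i = 0 then (A 0 j + A 1 j) / sqrt 2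
              else if i = 1 then (A 1 j - A 0 j) / sqrt 2 else A i j)"
      unfolding Defs.mat_mult_def sum_split01[OF n2] z
      by (auto simp: U_def c_def field_simps)
  qed
  with LI[OF U L M] show ?thesis by simp
qed

definition clip :: "real \<Rightarrow> real" where "clip t = max (-1) (min 1 t)"

lemma RP:
  assumes s: "\<sigma> permutes {..<n}" and P: "PB F"
  shows "(\<integral>A. F (\<lambda>i j. A i (\<sigma> j)) \<partial>\<mu>) = (\<integral>A. F A \<partial>\<mu>)"
proof -
  have L: "loc n F" and M: "(\<lambda>x. F (unent x)) \<in> borel_measurable (mat_space n)"
    using P unfolding PB_def by auto
  obtain K where K: "\<And>X. (\<forall>i<n. \<forall>j<n. \<bar>X i j\<bar> \<le> 1) \<Longrightarrow> \<bar>F X\<bar> \<le> K"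
    using P unfolding PB_def by auto
  have sl: "i < n \<Longrightarrow> \<sigma> i < n" for i using s by (meson lessThan_iff permutes_in_image)
  have clipm: "(\<lambda>x. clip (x (i, j))) \<in> borel_measurable (mat_space n)" if "i < n" "j < n" for i j
    unfolding clip_def using comp_meas[OF that] by measurable
  define Fc where "Fc X = F (\<lambda>i j. clip (X i j))" for X
  have Lc: "loc n Fc" using L unfolding loc_def Fc_def by auto
  have Kc: "\<bar>Fc X\<bar> \<le> K" for X unfolding Fc_def by (rule K) (auto simp: clip_def)
  have Mc: "(\<lambda>x. Fc (unent x)) \<in> borel_measurable (mat_space n)"
    unfolding Fc_def unent_def by (rule loc_meas_compose[OF L M]) (rule clipm)
  define H where "H X = Fc (\<lambda>i j. X j i)" for X
  have LH: "loc n H" using Lc unfolding loc_def H_def by auto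
  have MH: "(\<lambda>x. H (unent x)) \<in> borel_measurable (mat_space n)"
    unfolding H_def unent_def by (rule loc_meas_compose[OF Lc Mc]) (auto simp: unent_def intro!: comp_meas)
  define K1 where "K1 Y = H (\<lambda>i j. Y (\<sigma> i) j)" for Y
  have LK1: "loc n K1" using LH sl unfolding loc_def K1_def by auto
  have MK1: "(\<lambda>x. K1 (unent x)) \<in> borel_measurable (mat_space n)"
    unfolding K1_def unent_def by (rule loc_meas_compose[OF LH MH]) (auto simp: unent_def sl intro!: comp_meas)
  have BK1: "\<bar>K1 X\<bar> \<le> K" for X unfolding K1_def H_def by (rule Kc)
  have AEc: "AE A in \<mu>. F A = Fc A \<and> F (\<lambda>i j. A i (\<sigma> j)) = Fc (\<lambda>i j. A i (\<sigma> j))"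
    using AE_orth
  proof eventually_elim
    case (elim A)
    have b: "i < n \<Longrightarrow> j < n \<Longrightarrow> \<bar>A i j\<bar> \<le> 1" for i j by (rule orth_bound[OF elim])
    have "F A = Fc A" unfolding Fc_def by (rule loc_app[OF L]) (use b in \<open>auto simp: clip_def abs_le_iff\<close>)
    moreover have "F (\<lambda>i j. A i (\<sigma> j)) = Fc (\<lambda>i j. A i (\<sigma> j))"
      unfolding Fc_def by (rule loc_app[OF L]) (use b sl in \<open>auto simp: clip_def abs_le_iff\<close>)
    ultimately show ?case by simp
  qed
  have mF: "F \<in> borel_measurable \<mu>" by (rule PB_meas[OF P])
  have mFs: "(\<lambda>A. F (\<lambda>i j. A i (\<sigma> j))) \<in> borel_measurable \<mu>"
    by (rule loc_meas_compose[OF L M]) simp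
  have mFc: "Fc \<in> borel_measurable \<mu>"
    using loc_meas_compose[OF Lc Mc, of "\<lambda>A. A"] by simp
  have mFcs: "(\<lambda>A. Fc (\<lambda>i j. A i (\<sigma> j))) \<in> borel_measurable \<mu>"
    by (rule loc_meas_compose[OF Lc Mc]) simp
  have "(\<integral>A. F (\<lambda>i j. A i (\<sigma> j)) \<partial>\<mu>) = (\<integral>A. Fc (\<lambda>i j. A i (\<sigma> j)) \<partial>\<mu>)"
    by (rule integral_cong_AE[OF mFs mFcs]) (use AEc in auto)
  also have "\<dots> = (\<integral>A. K1 (\<lambda>i j. A j i) \<partial>\<mu>)" unfolding K1_def H_def by simp
  also have "\<dots> = (\<integral>A. K1 A \<partial>\<mu>)" by (rule TR[OF LK1 MK1 BK1, symmetric])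
  also have "\<dots> = (\<integral>A. H A \<partial>\<mu>)" unfolding K1_def by (rule LIP[OF s LH MH])
  also have "\<dots> = (\<integral>A. Fc (\<lambda>i j. A j i) \<partial>\<mu>)" unfolding H_def by simp
  also have "\<dots> = (\<integral>A. Fc A \<partial>\<mu>)" by (rule TR[OF Lc Mc Kc, symmetric])
  also have "\<dots> = (\<integral>A. F A \<partial>\<mu>)"
    by (rule integral_cong_AE[OF mFc mF]) (use AEc in auto)
  finally show ?thesis .
qed

end


context haarL begin

lemma PB_int_simps[simp]:
  "PB F \<Longrightarrow> PB G \<Longrightarrow> PB (\<lambda>A. F A + G A)"
  "PB F \<Longrightarrow> PB G \<Longrightarrow> PB (\<lambda>A. F A - G A)"
  "PB F \<Longrightarrow> PB G \<Longrightarrow> PB (\<lambda>A. F A * G A)"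
  "PB F \<Longrightarrow> PB (\<lambda>A. F A ^ k)"
  "i < n \<Longrightarrow> j < n \<Longrightarrow> PB (\<lambda>A. A i j)"
  by auto

lemma col_basic:
  assumes n2: "2 \<le> n" and c: "c < n"
  shows s01: "\<And>a b. (\<integral>A. A 0 c ^ a * A 1 c ^ b \<partial>\<mu>) = (\<integral>A. A 0 c ^ b * A 1 c ^ a \<partial>\<mu>)"
    and odd1: "\<And>a b. odd b \<Longrightarrow> (\<integral>A. A 0 c ^ a * A 1 c ^ b \<partial>\<mu>) = 0"
    and rot: "\<And>k. (\<integral>A. ((A 0 c + A 1 c) / sqrt 2) ^ k \<partial>\<mu>) = (\<integral>A. A 0 c ^ k \<partial>\<mu>)"
    and norm: "\<And>a. (\<integral>A. A 0 c ^ a \<partial>\<mu>) = (\<integral>A. A 0 c ^ (a + 2) \<partial>\<mu>)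
                      + (real n - 1) * (\<integral>A. A 0 c ^ a * A 1 c ^ 2 \<partial>\<mu>)"
proof -
  have n1: "1 < n" "0 < n" using n2 by auto
  show "(\<integral>A. A 0 c ^ a * A 1 c ^ b \<partial>\<mu>) = (\<integral>A. A 0 c ^ b * A 1 c ^ a \<partial>\<mu>)" for a b
  proof -
    have "PB (\<lambda>A. A 0 c ^ a * A 1 c ^ b)" using n1 c by auto
    from LIPb[OF permutes_swap_id[of 0 "{..<n}" 1] this] n1
    show ?thesis by (simp add: mult.commute)
  qed
  show "odd b \<Longrightarrow> (\<integral>A. A 0 c ^ a * A 1 c ^ b \<partial>\<mu>) = 0" for a b
  proof -
    assume ob: "odd b"
    have "PB (\<lambda>A. A 0 c ^ a * A 1 c ^ b)" using n1 c by auto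
    from LIS[OF n1(1) this] ob
    show ?thesis by (simp add: power_minus_odd)
  qed
  show "(\<integral>A. ((A 0 c + A 1 c) / sqrt 2) ^ k \<partial>\<mu>) = (\<integral>A. A 0 c ^ k \<partial>\<mu>)" for k
  proof -
    have "PB (\<lambda>A. A 0 c ^ k)" using n1 c by auto
    from LIR[OF n2 this] show ?thesis by simp
  qed
  show "(\<integral>A. A 0 c ^ a \<partial>\<mu>) = (\<integral>A. A 0 c ^ (a + 2) \<partial>\<mu>)
                      + (real n - 1) * (\<integral>A. A 0 c ^ a * A 1 c ^ 2 \<partial>\<mu>)" for a
  proof -
    have ex: "(\<integral>A. A 0 c ^ a * A i c ^ 2 \<partial>\<mu>) = (\<integral>A. A 0 c ^ a * A 1 c ^ 2 \<partial>\<mu>)"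
      if i: "i \<in> {1..<n}" for i
    proof -
      have "PB (\<lambda>A. A 0 c ^ a * A 1 c ^ 2)" using n1 c by auto
      from LIPb[OF permutes_swap_id[of 1 "{..<n}" i] this] i
      show ?thesis by auto
    qed
    have "(\<integral>A. A 0 c ^ a \<partial>\<mu>) = (\<integral>A. (\<Sum>i<n. A 0 c ^ a * A i c ^ 2) \<partial>\<mu>)"
    proof (rule integral_cong_AE)
      show "AE A in \<mu>. A 0 c ^ a = (\<Sum>i<n. A 0 c ^ a * A i c ^ 2)"
        using AE_orth
      proof eventually_elim
        case (elim A)
        then have "(\<Sum>i<n. A i c * A i c) = 1" using c unfolding Defs.orthogonal_mat_def by auto
        then show ?case by (simp add: sum_distrib_left[symmetric] power2_eq_square)
      qed
    qed (use n1 c in \<open>auto intro!: PB_meas\<close>)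
    also have "\<dots> = (\<Sum>i<n. (\<integral>A. A 0 c ^ a * A i c ^ 2 \<partial>\<mu>))"
      by (rule Bochner_Integration.integral_sum[where I="{..<n}" and M=\<mu> and f="\<lambda>i A. A 0 c ^ a * A i c ^ 2"]) (use n1 c in auto)
    also have "\<dots> = (\<integral>A. A 0 c ^ a * A 0 c ^ 2 \<partial>\<mu>) + (\<Sum>i\<in>{1..<n}. (\<integral>A. A 0 c ^ a * A i c ^ 2 \<partial>\<mu>))"
    proof -
      have "{..<n} = insert 0 {1..<n}" using n1 by auto
      then show ?thesis by simp
    qed
    also have "(\<Sum>i\<in>{1..<n}. (\<integral>A. A 0 c ^ a * A i c ^ 2 \<partial>\<mu>)) = (real n - 1) * (\<integral>A. A 0 c ^ a * A 1 c ^ 2 \<partial>\<mu>)"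
    proof -
      have "(\<Sum>i\<in>{1..<n}. (\<integral>A. A 0 c ^ a * A i c ^ 2 \<partial>\<mu>)) = (\<Sum>i\<in>{1..<n}. (\<integral>A. A 0 c ^ a * A 1 c ^ 2 \<partial>\<mu>))"
        by (rule sum.cong[OF refl]) (rule ex)
      also have "\<dots> = real (n - 1) * (\<integral>A. A 0 c ^ a * A 1 c ^ 2 \<partial>\<mu>)"
        by (simp only: sum_constant card_atLeastLessThan diff_Suc_1 One_nat_def)
      also have "real (n - 1) = real n - 1" using n1 by linarith
      finally show ?thesis .
    qed
    finally have "(\<integral>A. A 0 c ^ a \<partial>\<mu>) = (\<integral>A. A 0 c ^ a * A 0 c ^ 2 \<partial>\<mu>) + (real n - 1) * (\<integral>A. A 0 c ^ a * A 1 c ^ 2 \<partial>\<mu>)" .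
    moreover have "\<And>A::nat \<Rightarrow> nat \<Rightarrow> real. A 0 c ^ a * A 0 c ^ 2 = A 0 c ^ (a + 2)" by (simp only: power_add)
    ultimately show ?thesis by (simp only:)
  qed
qed

end


lemma sqrt2_pow: "sqrt 2 ^ 4 = (4::real)" "sqrt 2 ^ 6 = (8::real)" "sqrt 2 ^ 8 = (16::real)"
proof -
  have "sqrt 2 ^ 4 = (sqrt 2 ^ 2) ^ (2::nat)" by (simp only: power_mult[symmetric]) simp
  then show "sqrt 2 ^ 4 = (4::real)" by simp
  have "sqrt 2 ^ 6 = (sqrt 2 ^ 2) ^ (3::nat)" by (simp only: power_mult[symmetric]) simp
  then show "sqrt 2 ^ 6 = (8::real)" by simp
  have "sqrt 2 ^ 8 = (sqrt 2 ^ 2) ^ (4::nat)" by (simp only: power_mult[symmetric]) simp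
  then show "sqrt 2 ^ 8 = (16::real)" by simp
qed

lemma expand4: "((x + y) / sqrt 2) ^ 4 = (x^4 + 4*(x^3*y) + 6*(x^2*y^2) + 4*(x*y^3) + y^4) / 4"
  proof -
  have "((x + y) / sqrt 2) ^ 4 = (x + y) ^ 4 / 4" by (simp only: power_divide sqrt2_pow)
  also have "(x + y) ^ 4 = (x^4 + 4*(x^3*y) + 6*(x^2*y^2) + 4*(x*y^3) + y^4)" by (simp add: eval_nat_numeral algebra_simps)
  finally show ?thesis .
qed

lemma expand6: "((x + y) / sqrt 2) ^ 6 = (x^6 + 6*(x^5*y) + 15*(x^4*y^2) + 20*(x^3*y^3) + 15*(x^2*y^4) + 6*(x*y^5) + y^6) / 8"
  proof -
  have "((x + y) / sqrt 2) ^ 6 = (x + y) ^ 6 / 8" by (simp only: power_divide sqrt2_pow)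
  also have "(x + y) ^ 6 = (x^6 + 6*(x^5*y) + 15*(x^4*y^2) + 20*(x^3*y^3) + 15*(x^2*y^4) + 6*(x*y^5) + y^6)" by (simp add: eval_nat_numeral algebra_simps)
  finally show ?thesis .
qed

lemma expand8: "((x + y) / sqrt 2) ^ 8 = (x^8 + 8*(x^7*y) + 28*(x^6*y^2) + 56*(x^5*y^3) + 70*(x^4*y^4) + 56*(x^3*y^5) + 28*(x^2*y^6) + 8*(x*y^7) + y^8) / 16"
  proof -
  have "((x + y) / sqrt 2) ^ 8 = (x + y) ^ 8 / 16" by (simp only: power_divide sqrt2_pow)
  also have "(x + y) ^ 8 = (x^8 + 8*(x^7*y) + 28*(x^6*y^2) + 56*(x^5*y^3) + 70*(x^4*y^4) + 56*(x^3*y^5) + 28*(x^2*y^6) + 8*(x*y^7) + y^8)" by (simp add: eval_nat_numeral algebra_simps)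
  finally show ?thesis .
qed

context haarL begin

lemma col_moments:
  assumes n2: "2 \<le> n" and c: "c < n"
  shows "(\<integral>A. A 0 c ^ 2 \<partial>\<mu>) = 1 / real n"
    and "(\<integral>A. A 0 c ^ 8 \<partial>\<mu>) \<le> 135 / real n ^ 4"
proof -
  interpret prob_space \<mu> by (rule prob)
  have n1: "1 < n" "0 < n" using n2 by auto
  note s01 = s01[OF n2 c] and odd1 = odd1[OF n2 c] and rot = rot[OF n2 c] and norm = norm[OF n2 c]
  define P where "P a b = (\<integral>A. A 0 c ^ a * A 1 c ^ b \<partial>\<mu>)" for a b
  define Q where "Q a = (\<integral>A. A 0 c ^ a \<partial>\<mu>)" for a
  have P0: "P a 0 = Q a" for a unfolding P_def Q_def by simp
  have Ps: "P a b = P b a" for a b unfolding P_def by (rule s01)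
  have Po: "odd b \<Longrightarrow> P a b = 0" for a b unfolding P_def by (rule odd1)
  have Q0: "Q 0 = 1" unfolding Q_def by (simp add: prob_space)
  have N: "Q a = Q b + (real n - 1) * P a 2" if "b = a + 2" for a b unfolding P_def Q_def that by (rule norm)
  have r4: "Q 4 = (Q 4 + 4 * P 3 1 + 6 * P 2 2 + 4 * P 1 3 + P 0 4) / 4"
    using rot[of 4] n1 c unfolding expand4 P_def Q_def by simp
  have r6: "Q 6 = (Q 6 + 6 * P 5 1 + 15 * P 4 2 + 20 * P 3 3 + 15 * P 2 4 + 6 * P 1 5 + P 0 6) / 8"
    using rot[of 6] n1 c unfolding expand6 P_def Q_def by simp
  have r8: "Q 8 = (Q 8 + 8 * P 7 1 + 28 * P 6 2 + 56 * P 5 3 + 70 * P 4 4 + 56 * P 3 5 + 28 * P 2 6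
                 + 8 * P 1 7 + P 0 8) / 16"
    using rot[of 8] n1 c unfolding expand8 P_def Q_def by simp
  have P44: "P 4 4 \<le> P 6 2"
  proof -
    have "P 4 4 \<le> (\<integral>A. (A 0 c ^ 6 * A 1 c ^ 2 + A 0 c ^ 2 * A 1 c ^ 6) / 2 \<partial>\<mu>)"
      unfolding P_def
    proof (rule integral_mono)
      fix A :: "nat \<Rightarrow> nat \<Rightarrow> real"
      let ?x = "A 0 c" and ?y = "A 1 c"
      have "0 \<le> ?x^2 * ?y^2 * (?x^2 - ?y^2)^2" by simp
      then show "A 0 c ^ 4 * A 1 c ^ 4 \<le> (A 0 c ^ 6 * A 1 c ^ 2 + A 0 c ^ 2 * A 1 c ^ 6) / 2"
        by (simp add: eval_nat_numeral algebra_simps)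
    qed (use n1 c in auto)
    also have "\<dots> = (P 6 2 + P 2 6) / 2" unfolding P_def using n1 c by simp
    finally show ?thesis using Ps[of 2 6] by simp
  qed
  have N0: "Q 0 = Q 2 + (real n - 1) * P 0 2" by (rule N) simp
  have N2: "Q 2 = Q 4 + (real n - 1) * P 2 2" by (rule N) simp
  have N4: "Q 4 = Q 6 + (real n - 1) * P 4 2" by (rule N) simp
  have N6: "Q 6 = Q 8 + (real n - 1) * P 6 2" by (rule N) simp
  have Q2: "Q 2 = 1 / real n"
  proof -
    have "1 = Q 2 + (real n - 1) * Q 2" using N0 Q0 Ps[of 0 2] P0[of 2] by simp
    then have "real n * Q 2 = 1" by (simp add: algebra_simps)
    then show ?thesis using n1 by (simp add: field_simps)
  qed
  then show "(\<integral>A. A 0 c ^ 2 \<partial>\<mu>) = 1 / real n" unfolding Q_def .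
  have "Q 4 = 3 * P 2 2" using r4 Po[of 1 3] Po[of 3 1] Ps[of 0 4] P0[of 4] by simp
  moreover have "Q 2 = Q 4 + (real n - 1) * P 2 2" using N2 by simp
  ultimately have "Q 2 = Q 4 * (real n + 2) / 3" by (simp add: algebra_simps)
  then have e4: "Q 4 * (real n * (real n + 2)) = 3" using Q2 n1 by (simp add: field_simps)
  have nz: "real n * (real n + 2) \<noteq> 0" using n1 by simp
  from e4 have Q4: "Q 4 = 3 / (real n * (real n + 2))" using nz by (simp add: eq_divide_eq)
  have "Q 6 = 5 * P 4 2" using r6 Po[of 1 5] Po[of 3 3] Po[of 5 1] Ps[of 0 6] P0[of 6] Ps[of 2 4] by simp
  moreover have "Q 4 = Q 6 + (real n - 1) * P 4 2" using N4 by simp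
  ultimately have "Q 4 = Q 6 * (real n + 4) / 5" by (simp add: algebra_simps)
  then have Q6: "Q 6 = 5 * Q 4 / (real n + 4)" using n1 by (simp add: field_simps)
  have "14 * Q 8 = 56 * P 6 2 + 70 * P 4 4"
    using r8 Po[of 1 7] Po[of 3 5] Po[of 5 3] Po[of 7 1] Ps[of 0 8] P0[of 8] Ps[of 2 6] by simp
  then have "Q 8 \<le> 9 * P 6 2" using P44 by simp
  moreover have "Q 6 = Q 8 + (real n - 1) * P 6 2" using N6 by simp
  moreover have "real n - 1 \<ge> 0" using n1 by simp
  ultimately have "Q 6 \<ge> Q 8 + (real n - 1) * (Q 8 / 9)"
    by (metis add_le_cancel_left divide_le_eq_numeral1(1) mult_left_mono mult.commute)
  then have "Q 8 * (real n + 8) \<le> 9 * Q 6" by (simp add: field_simps)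
  then have Q8: "Q 8 \<le> 9 * Q 6 / (real n + 8)" by (simp add: field_simps)
  have "Q 8 \<le> 135 / (real n * (real n + 2) * (real n + 4) * (real n + 8))"
    using Q8 Q6 Q4 n1 by (simp add: field_simps)
  also have "\<dots> \<le> 135 / real n ^ 4"
  proof (rule divide_left_mono)
    have "real n ^ 4 = real n * real n * real n * real n" by (simp add: eval_nat_numeral)
    also have "\<dots> \<le> real n * (real n + 2) * (real n + 4) * (real n + 8)"
      by (intro mult_mono) auto
    finally show "real n ^ 4 \<le> real n * (real n + 2) * (real n + 4) * (real n + 8)" .
  qed (use n1 in auto)
  finally show "(\<integral>A. A 0 c ^ 8 \<partial>\<mu>) \<le> 135 / real n ^ 4" unfolding Q_def .
qed

end


lemma pw4:
  fixes s w p :: real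
  assumes p: "1 \<le> p"
  shows "(s + w) ^ 4 \<le> (1 + 1 / (2 * p)) * s ^ 4 + 4 * (s ^ 3 * w) + (32 * p + 3) * w ^ 4"
proof -
  have e1: "(s + w) ^ 4 = s^4 + 4*(s^3*w) + 6*(s^2*w^2) + 4*(s*w^3) + w^4"
    by (simp add: eval_nat_numeral algebra_simps)
  have e2: "2*w^2*(s-w)^2 = 2*(s^2*w^2) - 4*(s*w^3) + 2*w^4"
    by (simp add: eval_nat_numeral algebra_simps)
  have h1: "0 \<le> 2*w^2*(s-w)^2" by simp
  have e3: "(s^2 - 8*p*w^2)^2 / (2*p) = s^4/(2*p) - 8*(s^2*w^2) + 32*p*w^4"
    using p by (simp add: field_simps eval_nat_numeral)
  have h2: "0 \<le> (s^2 - 8*p*w^2)^2 / (2*p)" using p by simp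
  have e4: "(1 + 1 / (2 * p)) * s ^ 4 = s^4 + s^4/(2*p)" by (simp add: algebra_simps)
  have e5: "(32 * p + 3) * w ^ 4 = 32*p*w^4 + 3 * w^4" by (simp add: algebra_simps)
  show ?thesis unfolding e1 e4 e5 using h1 h2 unfolding e2 e3 by linarith
qed

lemma exch4:
  fixes M :: "'a measure" and W :: "nat \<Rightarrow> 'a \<Rightarrow> real" and N :: nat and m :: real
  assumes P: "prob_space M"
  and I1: "\<And>p. p \<le> N \<Longrightarrow> integrable M (\<lambda>x. (\<Sum>j<p. W j x) ^ 4)"
  and I2: "\<And>p i. p < N \<Longrightarrow> i < N \<Longrightarrow> integrable M (\<lambda>x. (\<Sum>j<p. W j x) ^ 3 * W i x)"
  and I3: "\<And>i. i < N \<Longrightarrow> integrable M (\<lambda>x. W i x ^ 4)"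
  and Z: "AE x in M. (\<Sum>j<N. W j x) = 0"
  and E: "\<And>p i. p < N \<Longrightarrow> p \<le> i \<Longrightarrow> i < N \<Longrightarrow>
     (\<integral>x. (\<Sum>j<p. W j x) ^ 3 * W i x \<partial>M) = (\<integral>x. (\<Sum>j<p. W j x) ^ 3 * W p x \<partial>M)"
  and B: "\<And>i. i < N \<Longrightarrow> (\<integral>x. W i x ^ 4 \<partial>M) \<le> m"
  shows "p \<le> N \<Longrightarrow> (\<integral>x. (\<Sum>j<p. W j x) ^ 4 \<partial>M) \<le> 64 * real p ^ 2 * m"
proof (induction p)
  case 0 show ?case by simp
next
  case (Suc p)
  interpret prob_space M by (rule P)
  have pN: "p < N" using Suc by simp
  define S where "S x = (\<Sum>j<p. W j x)" for x
  define f where "f = (\<integral>x. S x ^ 4 \<partial>M)"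
  define g where "g = (\<integral>x. S x ^ 3 * W p x \<partial>M)"
  define w where "w = (\<integral>x. W p x ^ 4 \<partial>M)"
  have IH: "f \<le> 64 * real p ^ 2 * m" using Suc unfolding f_def S_def by simp
  have f0: "0 \<le> f" unfolding f_def by (rule Bochner_Integration.integral_nonneg) simp
  have w0: "0 \<le> w" unfolding w_def by (rule Bochner_Integration.integral_nonneg) (simp add: zero_le_even_power)
  have wm: "w \<le> m" unfolding w_def using B pN by simp
  have m0: "0 \<le> m" using w0 wm by simp
  have g0: "g \<le> 0"
  proof -
    have "(\<Sum>i\<in>{p..<N}. (\<integral>x. S x ^ 3 * W i x \<partial>M)) = (\<integral>x. (\<Sum>i\<in>{p..<N}. S x ^ 3 * W i x) \<partial>M)"
      by (rule Bochner_Integration.integral_sum[symmetric]) (use I2 pN in \<open>auto simp: S_def\<close>)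
    also have "\<dots> = (\<integral>x. - (S x ^ 4) \<partial>M)"
    proof (rule integral_cong_AE)
      show "AE x in M. (\<Sum>i\<in>{p..<N}. S x ^ 3 * W i x) = - (S x ^ 4)"
        using Z
      proof eventually_elim
        case (elim x)
        have "(\<Sum>j<N. W j x) = S x + (\<Sum>i\<in>{p..<N}. W i x)"
          using sum.atLeastLessThan_concat[of 0 p N "\<lambda>j. W j x"] pN by (simp add: atLeast0LessThan S_def)
        then have "(\<Sum>i\<in>{p..<N}. W i x) = - S x" using elim by simp
        then show ?case by (simp add: sum_distrib_left[symmetric] eval_nat_numeral)
      qed
    next
      show "(\<lambda>x. \<Sum>i\<in>{p..<N}. S x ^ 3 * W i x) \<in> borel_measurable M"
        by (rule borel_measurable_integrable, rule Bochner_Integration.integrable_sum) (use I2 pN in \<open>simp add: S_def\<close>)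
      have "integrable M (\<lambda>x. S x ^ 4)" using I1[of p] pN by (simp add: S_def)
      then show "(\<lambda>x. - (S x ^ 4)) \<in> borel_measurable M"
        by (intro borel_measurable_uminus borel_measurable_integrable)
    qed
    also have "\<dots> = - f" unfolding f_def by simp
    finally have a: "(\<Sum>i\<in>{p..<N}. (\<integral>x. S x ^ 3 * W i x \<partial>M)) = - f" .
    have "(\<Sum>i\<in>{p..<N}. (\<integral>x. S x ^ 3 * W i x \<partial>M)) = (\<Sum>i\<in>{p..<N}. g)"
    proof (rule sum.cong[OF refl])
      fix i assume i: "i \<in> {p..<N}"
      show "(\<integral>x. S x ^ 3 * W i x \<partial>M) = g" unfolding S_def g_def by (rule E) (use i pN in auto)
    qed
    also have "\<dots> = real (N - p) * g" by simp
    finally have "real (N - p) * g = - f" using a by simp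
    moreover have "real (N - p) > 0" using pN by simp
    ultimately show ?thesis using f0 by (smt (verit) mult_pos_pos)
  qed
  show ?case
  proof (cases "p = 0")
    case True
    then show ?thesis using B[of 0] pN m0 by simp
  next
    case False
    then have p1: "1 \<le> real p" by simp
    have "(\<integral>x. (\<Sum>j<Suc p. W j x) ^ 4 \<partial>M) = (\<integral>x. (S x + W p x) ^ 4 \<partial>M)"
      unfolding S_def by simp
    also have "\<dots> \<le> (\<integral>x. (1 + 1 / (2 * real p)) * S x ^ 4 + 4 * (S x ^ 3 * W p x) + (32 * real p + 3) * W p x ^ 4 \<partial>M)"
    proof (rule integral_mono)
      show "integrable M (\<lambda>x. (S x + W p x) ^ 4)"
        using I1[of "Suc p"] Suc.prems unfolding S_def by (simp add: add.commute)
      show "integrable M (\<lambda>x. (1 + 1 / (2 * real p)) * S x ^ 4 + 4 * (S x ^ 3 * W p x) + (32 * real p + 3) * W p x ^ 4)"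
        using I1[of p] I2[of p p] I3[of p] pN unfolding S_def by simp
    qed (rule pw4[OF p1])
    also have "\<dots> = (1 + 1 / (2 * real p)) * f + 4 * g + (32 * real p + 3) * w"
      using I1[of p] I2[of p p] I3[of p] pN unfolding S_def f_def g_def w_def by simp
    also have "\<dots> \<le> (1 + 1 / (2 * real p)) * (64 * real p ^ 2 * m) + (32 * real p + 3) * m"
    proof -
      have a1: "(1 + 1 / (2 * real p)) * f \<le> (1 + 1 / (2 * real p)) * (64 * real p ^ 2 * m)"
        by (rule mult_left_mono[OF IH]) (use p1 in simp)
      have a2: "(32 * real p + 3) * w \<le> (32 * real p + 3) * m"
        by (rule mult_left_mono[OF wm]) (use p1 in simp)
      show ?thesis using a1 a2 g0 by linarith
    qed
    also have "\<dots> = (64 * real p ^ 2 + 64 * real p + 3) * m"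
      using p1 by (simp add: field_simps power2_eq_square)
    also have "\<dots> \<le> 64 * real (Suc p) ^ 2 * m"
      using m0 by (intro mult_right_mono) (auto simp: power2_eq_square algebra_simps)
    finally show ?thesis .
  qed
qed



lemma pw8: "((a::real) - b) ^ 4 \<le> 8 * (a ^ 4 + b ^ 4)"
proof -
  have h1: "(a - b) ^ 2 \<le> 2 * (a ^ 2 + b ^ 2)"
    using zero_le_power2[of "a + b"] by (simp add: power2_eq_square algebra_simps)
  have "(a - b) ^ 4 = ((a - b) ^ 2) ^ 2" by (simp flip: power_mult)
  also have "\<dots> \<le> (2 * (a ^ 2 + b ^ 2)) ^ 2" by (rule power_mono[OF h1]) simp
  also have "\<dots> \<le> 8 * (a ^ 4 + b ^ 4)"
    using zero_le_power2[of "a^2 - b^2"] by (simp add: power2_eq_square algebra_simps eval_nat_numeral)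
  finally show ?thesis .
qed

context haarL begin

lemma row_norm_AE: assumes i: "i < n" shows "AE A in \<mu>. (\<Sum>j<n. A i j ^ 2) = 1"
  using AE_orth
proof eventually_elim
  case (elim A)
  from orth_trans[OF elim] i have "(\<Sum>k<n. A i k * A i k) = 1"
    unfolding Defs.orthogonal_mat_def by auto
  then show ?case by (simp add: power2_eq_square)
qed

lemma col_norm_AE: assumes j: "j < n" shows "AE A in \<mu>. (\<Sum>i<n. A i j ^ 2) = 1"
  using AE_orth
proof eventually_elim
  case (elim A)
  from elim j have "(\<Sum>k<n. A k j * A k j) = 1"
    unfolding Defs.orthogonal_mat_def by auto
  then show ?case by (simp add: power2_eq_square)
qed

lemma stage2:
  assumes n2: "2 \<le> n" and q: "q \<le> n"
  shows "(\<integral>A. (\<Sum>j<q. A 0 j ^ 2 - 1 / real n) ^ 4 \<partial>\<mu>) \<le> 64 * real q ^ 2 * (1088 / real n ^ 4)"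
proof -
  have n1: "0 < n" using n2 by auto
  define V :: "nat \<Rightarrow> (nat \<Rightarrow> nat \<Rightarrow> real) \<Rightarrow> real" where "V j A = A 0 j ^ 2 - 1 / real n" for j A
  have PV: "j < n \<Longrightarrow> PB (V j)" for j unfolding V_def using n1 by auto
  have PS: "p \<le> n \<Longrightarrow> PB (\<lambda>A. \<Sum>j<p. V j A)" for p using PV by auto
  have "(\<integral>A. (\<Sum>j<q. V j A) ^ 4 \<partial>\<mu>) \<le> 64 * real q ^ 2 * (1088 / real n ^ 4)"
  proof (rule exch4[OF prob, where N = n])
    show "integrable \<mu> (\<lambda>x. (\<Sum>j<p. V j x) ^ 4)" if "p \<le> n" for p
      using PS[OF that] by (intro PB_int) auto
    show "integrable \<mu> (\<lambda>x. (\<Sum>j<p. V j x) ^ 3 * V i x)" if "p < n" "i < n" for p i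
      using PS[of p] PV[of i] that by (intro PB_int) auto
    show "integrable \<mu> (\<lambda>x. V i x ^ 4)" if "i < n" for i
      using PV[OF that] by (intro PB_int) auto
    show "AE x in \<mu>. (\<Sum>j<n. V j x) = 0"
      using row_norm_AE[OF n1]
    proof eventually_elim
      case (elim A)
      then show ?case using n1 by (simp add: V_def sum_subtractf)
    qed
    show "(\<integral>x. (\<Sum>j<p. V j x) ^ 3 * V i x \<partial>\<mu>) = (\<integral>x. (\<Sum>j<p. V j x) ^ 3 * V p x \<partial>\<mu>)"
      if pi: "p < n" "p \<le> i" "i < n" for p i
    proof -
      define \<sigma> where "\<sigma> = Transposition.transpose p i"
      have s: "\<sigma> permutes {..<n}" unfolding \<sigma>_def by (rule permutes_swap_id) (use pi in auto)
      define F :: "(nat \<Rightarrow> nat \<Rightarrow> real) \<Rightarrow> real" where "F A = (\<Sum>j<p. V j A) ^ 3 * V p A" for A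
      have PF: "PB F" unfolding F_def using PS[of p] PV[of p] pi by auto
      have e: "F (\<lambda>a b. A a (\<sigma> b)) = (\<Sum>j<p. V j A) ^ 3 * V i A" for A
      proof -
        have "(\<Sum>j<p. V j (\<lambda>a b. A a (\<sigma> b))) = (\<Sum>j<p. V j A)"
          by (rule sum.cong[OF refl]) (use pi in \<open>auto simp: V_def \<sigma>_def\<close>)
        moreover have "V p (\<lambda>a b. A a (\<sigma> b)) = V i A" by (simp add: V_def \<sigma>_def)
        ultimately show ?thesis unfolding F_def by simp
      qed
      from RP[OF s PF] show ?thesis unfolding e by (simp add: F_def)
    qed
    show "(\<integral>x. V i x ^ 4 \<partial>\<mu>) \<le> 1088 / real n ^ 4" if i: "i < n" for i
    proof -
      have "(\<integral>x. V i x ^ 4 \<partial>\<mu>) \<le> (\<integral>x. 8 * (x 0 i ^ 8 + (1 / real n) ^ 4) \<partial>\<mu>)"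
      proof (rule integral_mono)
        fix x :: "nat \<Rightarrow> nat \<Rightarrow> real"
        have "(x 0 i ^ 2) ^ 4 = x 0 i ^ 8" by (simp flip: power_mult)
        then show "V i x ^ 4 \<le> 8 * (x 0 i ^ 8 + (1 / real n) ^ 4)"
          unfolding V_def using pw8[of "x 0 i ^ 2" "1 / real n"] by simp
      qed (use PV[OF i] i n1 in \<open>auto intro!: PB_int\<close>)
      also have "\<dots> = 8 * ((\<integral>x. x 0 i ^ 8 \<partial>\<mu>) + (1 / real n) ^ 4)"
        using i n1 prob_space.prob_space[OF prob] by simp
      also have "\<dots> \<le> 8 * (135 / real n ^ 4 + (1 / real n) ^ 4)"
        using col_moments(2)[OF n2 i] by simp
      also have "\<dots> = 1088 / real n ^ 4" by (simp add: field_simps)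
      finally show ?thesis .
    qed
  qed (use q in auto)
  then show ?thesis unfolding V_def .
qed


lemma sq_mean: "i < n \<Longrightarrow> j < n \<Longrightarrow> 2 \<le> n \<Longrightarrow> (\<integral>A. A i j ^ 2 \<partial>\<mu>) = 1 / real n"
proof -
  assume i: "i < n" and j: "j < n" and n2: "2 \<le> n"
  have n1: "0 < n" using n2 by auto
  have PF: "PB (\<lambda>A. A 0 j ^ 2)" using n1 j by auto
  from LIPb[OF permutes_swap_id[of 0 "{..<n}" i] PF] n1 i
  have "(\<integral>A. A i j ^ 2 \<partial>\<mu>) = (\<integral>A. A 0 j ^ 2 \<partial>\<mu>)" by simp
  also have "\<dots> = 1 / real n" by (rule col_moments(1)[OF n2 j])
  finally show ?thesis .
qed

lemma stage1:
  assumes n2: "2 \<le> n" and p: "p \<le> n" and q: "q \<le> n"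
  shows "(\<integral>A. (\<Sum>i<p. (\<Sum>j<q. A i j ^ 2) - real q / real n) ^ 4 \<partial>\<mu>)
           \<le> 64 * real p ^ 2 * (64 * real q ^ 2 * (1088 / real n ^ 4))"
proof -
  have n1: "0 < n" using n2 by auto
  define W :: "nat \<Rightarrow> (nat \<Rightarrow> nat \<Rightarrow> real) \<Rightarrow> real" where
    "W i A = (\<Sum>j<q. A i j ^ 2) - real q / real n" for i A
  have PW: "i < n \<Longrightarrow> PB (W i)" for i unfolding W_def using q by auto
  have PS: "p \<le> n \<Longrightarrow> PB (\<lambda>A. \<Sum>j<p. W j A)" for p using PW by auto
  have "(\<integral>A. (\<Sum>i<p. W i A) ^ 4 \<partial>\<mu>) \<le> 64 * real p ^ 2 * (64 * real q ^ 2 * (1088 / real n ^ 4))"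
  proof (rule exch4[OF prob, where N = n])
    show "integrable \<mu> (\<lambda>x. (\<Sum>j<p. W j x) ^ 4)" if "p \<le> n" for p
      using PS[OF that] by (intro PB_int) auto
    show "integrable \<mu> (\<lambda>x. (\<Sum>j<p. W j x) ^ 3 * W i x)" if "p < n" "i < n" for p i
      using PS[of p] PW[of i] that by (intro PB_int) auto
    show "integrable \<mu> (\<lambda>x. W i x ^ 4)" if "i < n" for i
      using PW[OF that] by (intro PB_int) auto
    show "AE x in \<mu>. (\<Sum>i<n. W i x) = 0"
      using AE_orth
    proof eventually_elim
      case (elim A)
      have cn: "(\<Sum>i<n. A i j ^ 2) = 1" if "j < q" for j
      proof -
        from elim that q have "(\<Sum>k<n. A k j * A k j) = 1"
          unfolding Defs.orthogonal_mat_def by auto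
        then show ?thesis by (simp add: power2_eq_square)
      qed
      have "(\<Sum>i<n. W i A) = (\<Sum>i<n. \<Sum>j<q. A i j ^ 2) - real n * (real q / real n)"
        by (simp add: W_def sum_subtractf)
      also have "(\<Sum>i<n. \<Sum>j<q. A i j ^ 2) = (\<Sum>j<q. \<Sum>i<n. A i j ^ 2)" by (rule sum.swap)
      also have "\<dots> = (\<Sum>j<q. 1)" by (rule sum.cong[OF refl]) (use cn in auto)
      finally show ?case using n1 by simp
    qed
    show "(\<integral>x. (\<Sum>j<p. W j x) ^ 3 * W i x \<partial>\<mu>) = (\<integral>x. (\<Sum>j<p. W j x) ^ 3 * W p x \<partial>\<mu>)"
      if pi: "p < n" "p \<le> i" "i < n" for p i
    proof -
      define \<sigma> where "\<sigma> = Transposition.transpose p i"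
      have s: "\<sigma> permutes {..<n}" unfolding \<sigma>_def by (rule permutes_swap_id) (use pi in auto)
      define F :: "(nat \<Rightarrow> nat \<Rightarrow> real) \<Rightarrow> real" where "F A = (\<Sum>j<p. W j A) ^ 3 * W p A" for A
      have PF: "PB F" unfolding F_def using PS[of p] PW[of p] pi by auto
      have e: "F (\<lambda>a b. A (\<sigma> a) b) = (\<Sum>j<p. W j A) ^ 3 * W i A" for A
      proof -
        have "(\<Sum>j<p. W j (\<lambda>a b. A (\<sigma> a) b)) = (\<Sum>j<p. W j A)"
          by (rule sum.cong[OF refl]) (use pi in \<open>auto simp: W_def \<sigma>_def\<close>)
        moreover have "W p (\<lambda>a b. A (\<sigma> a) b) = W i A" by (simp add: W_def \<sigma>_def)
        ultimately show ?thesis unfolding F_def by simp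
      qed
      from LIPb[OF s PF] show ?thesis unfolding e by (simp add: F_def)
    qed
    show "(\<integral>x. W i x ^ 4 \<partial>\<mu>) \<le> 64 * real q ^ 2 * (1088 / real n ^ 4)" if i: "i < n" for i
    proof -
      have PF: "PB (\<lambda>A. W 0 A ^ 4)" using PW[of 0] n1 by auto
      from LIPb[OF permutes_swap_id[of 0 "{..<n}" i] PF] n1 i
      have "(\<integral>x. W i x ^ 4 \<partial>\<mu>) = (\<integral>x. W 0 x ^ 4 \<partial>\<mu>)" by (simp add: W_def)
      also have "\<dots> = (\<integral>A. (\<Sum>j<q. A 0 j ^ 2 - 1 / real n) ^ 4 \<partial>\<mu>)"
        by (simp add: W_def sum_subtractf)
      also have "\<dots> \<le> 64 * real q ^ 2 * (1088 / real n ^ 4)" by (rule stage2[OF n2 q])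
      finally show ?thesis .
    qed
  qed (use p in auto)
  then show ?thesis unfolding W_def .
qed


lemma main_bound:
  assumes n2: "2 \<le> n" and p: "p \<le> n" and q: "q \<le> n"
  shows "\<bar>cumulant4 \<mu> (\<lambda>A. \<Sum>i<p. \<Sum>j<q. (A i j)^2)\<bar>
           \<le> 17825792 * (real p)^2 * (real q)^2 / (real n)^4"
proof -
  interpret P: prob_space \<mu> by (rule prob)
  have n1: "0 < n" using n2 by auto
  define T :: "(nat \<Rightarrow> nat \<Rightarrow> real) \<Rightarrow> real" where "T A = (\<Sum>i<p. \<Sum>j<q. (A i j)^2)" for A
  define c where "c = real p * real q / real n"
  define Y where "Y A = T A - c" for A
  have PT: "PB T" unfolding T_def using p q by auto
  have PY: "PB Y" unfolding Y_def using PT by auto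
  have TY: "T A = Y A + c" for A unfolding Y_def by simp
  define s where "s k = (\<integral>A. Y A ^ k \<partial>\<mu>)" for k
  have ET: "(\<integral>A. T A \<partial>\<mu>) = c"
  proof -
    have "(\<integral>A. T A \<partial>\<mu>) = (\<Sum>i<p. (\<integral>A. (\<Sum>j<q. A i j ^ 2) \<partial>\<mu>))"
      unfolding T_def by (rule Bochner_Integration.integral_sum) (use p q in \<open>auto intro!: PB_int\<close>)
    also have "\<dots> = (\<Sum>i<p. \<Sum>j<q. (\<integral>A. A i j ^ 2 \<partial>\<mu>))"
      by (intro sum.cong refl Bochner_Integration.integral_sum) (use p q in \<open>auto intro!: PB_int\<close>)
    also have "\<dots> = (\<Sum>i<p. \<Sum>j<q. 1 / real n)"
      by (intro sum.cong refl sq_mean) (use p q n2 in auto)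
    also have "\<dots> = c" unfolding c_def by simp
    finally show ?thesis .
  qed
  have s1: "s 1 = 0" unfolding s_def Y_def using ET PT by (simp add: P.prob_space)
  have raw: "raw_moment \<mu> T k = (\<integral>A. (Y A + c) ^ k \<partial>\<mu>)" for k
    unfolding raw_moment_def TY ..
  have r1: "raw_moment \<mu> T 1 = s 1 + c"
    unfolding raw s_def using PY by (simp add: P.prob_space)
  have r2: "raw_moment \<mu> T 2 = s 2 + 2 * c * s 1 + c^2"
  proof -
    have "\<And>A. (Y A + c) ^ 2 = Y A ^ 2 + 2 * c * Y A + c ^ 2" by (simp add: power2_eq_square algebra_simps)
    then show ?thesis unfolding raw s_def using PY by (simp add: P.prob_space)
  qed
  have r3: "raw_moment \<mu> T 3 = s 3 + 3 * c * s 2 + 3 * c^2 * s 1 + c^3"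
  proof -
    have "\<And>A. (Y A + c) ^ 3 = Y A ^ 3 + 3 * c * Y A ^ 2 + 3 * c^2 * Y A + c ^ 3"
      by (simp add: eval_nat_numeral algebra_simps)
    then show ?thesis unfolding raw s_def using PY by (simp add: P.prob_space)
  qed
  have r4: "raw_moment \<mu> T 4 = s 4 + 4 * c * s 3 + 6 * c^2 * s 2 + 4 * c^3 * s 1 + c^4"
  proof -
    have "\<And>A. (Y A + c) ^ 4 = Y A ^ 4 + 4 * c * Y A ^ 3 + 6 * c^2 * Y A ^ 2 + 4 * c^3 * Y A + c ^ 4"
      by (simp add: eval_nat_numeral algebra_simps)
    then show ?thesis unfolding raw s_def using PY by (simp add: P.prob_space)
  qed
  have cum: "cumulant4 \<mu> T = s 4 - 3 * (s 2)^2"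
    unfolding cumulant4_def r1 r2 r3 r4 s1 by (simp add: algebra_simps power2_eq_square eval_nat_numeral)
  have s4: "0 \<le> s 4" unfolding s_def by (rule Bochner_Integration.integral_nonneg) (simp add: zero_le_even_power)
  have s2: "(s 2)^2 \<le> s 4"
  proof -
    have "0 \<le> (\<integral>A. (Y A ^ 2 - s 2) ^ 2 \<partial>\<mu>)" by (rule Bochner_Integration.integral_nonneg) simp
    also have "\<dots> = s 4 - 2 * s 2 * s 2 + (s 2)^2"
    proof -
      have "\<And>A. (Y A ^ 2 - s 2) ^ 2 = Y A ^ 4 - 2 * s 2 * Y A ^ 2 + (s 2)^2"
        by (simp add: eval_nat_numeral algebra_simps)
      then show ?thesis unfolding s_def using PY by (simp add: P.prob_space)
    qed
    finally show ?thesis by (simp add: power2_eq_square)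
  qed
  have "\<bar>cumulant4 \<mu> T\<bar> \<le> 4 * s 4" unfolding cum using s2 s4 zero_le_power2[of "s 2"] unfolding abs_le_iff by linarith
  also have "s 4 = (\<integral>A. (\<Sum>i<p. (\<Sum>j<q. A i j ^ 2) - real q / real n) ^ 4 \<partial>\<mu>)"
  proof -
    have "Y A = (\<Sum>i<p. (\<Sum>j<q. A i j ^ 2) - real q / real n)" for A
      unfolding Y_def T_def c_def by (simp add: sum_subtractf)
    then show ?thesis unfolding s_def by simp
  qed
  also have "4 * \<dots> \<le> 4 * (64 * real p ^ 2 * (64 * real q ^ 2 * (1088 / real n ^ 4)))"
    using stage1[OF n2 p q] by simp
  also have "\<dots> = 17825792 * (real p)^2 * (real q)^2 / (real n)^4" by simp
  finally show ?thesis unfolding T_def .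
qed

end

theorem mainTheorem12:
  shows "\<exists>C::real. \<forall>n::nat. \<forall>p q :: nat. \<forall>\<mu>.
           2 \<le> n \<and> 1 \<le> p \<and> p \<le> n \<and> 1 \<le> q \<and> q \<le> n \<and> haar_orthogonal n \<mu> \<longrightarrow>
           \<bar>cumulant4 \<mu> (\<lambda>A. \<Sum>i<p. \<Sum>j<q. (A i j)^2)\<bar>
             \<le> C * (real p)^2 * (real q)^2 / (real n)^4"
proof (intro exI allI impI)
  fix n p q :: nat and \<mu> :: "(nat \<Rightarrow> nat \<Rightarrow> real) measure"
  assume h: "2 \<le> n \<and> 1 \<le> p \<and> p \<le> n \<and> 1 \<le> q \<and> q \<le> n \<and> haar_orthogonal n \<mu>"
  interpret haarL n \<mu> by unfold_locales (use h in auto)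
  show "\<bar>cumulant4 \<mu> (\<lambda>A. \<Sum>i<p. \<Sum>j<q. (A i j)^2)\<bar>
             \<le> 17825792 * (real p)^2 * (real q)^2 / (real n)^4"
    by (rule main_bound) (use h in auto)
qed


end
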